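(* Let $n\ge 2$ and let $\gamma:I\to\mathbb{R}^2$ ($0\in I$) be a front without inflection points with $\gamma'(0)=\mathbf{0}$. If $t=0$ is a singular point of each of $Ev(\gamma),Ev^2(\gamma),\dots,Ev^{n-1}(\gamma)$, then $\gamma$ is not $\mathcal{A}$-equivalent to $Cusp_{(n,n+1)}(t)=(t^n,t^{n+1})$ at $t=0$.
   Context: A $C^\infty$ curve $\gamma:I\to\mathbb{R}^2$ is a front if there is a $C^\infty$ map $\nu:I\to S^1$ with $\gamma'\cdot\nu=0$ and $(\gamma,\nu)$ an immersion. With $M$ the anticlockwise rotation by $\pi/2$, $\mu=M(\nu)$, $\ell=\nu'\cdot\mu$, $\beta=\gamma'\cdot\mu$; no inflection points means $\ell\neq0$ on $I$. Evolutes: $\beta_0=\beta$, $\beta_k=\frac{d}{dt}(\beta_{k-1}/\ell)$, $Ev^0(\gamma)=\gamma$, $Ev^{k}(\gamma)=Ev^{k-1}(\gamma)-\frac{\beta_{k-1}}{\ell}M^{k-1}(\nu)$, $Ev=Ev^1$. A point is singular for a curve if its derivative vanishes there. $\mathcal{A}$-equivalence means equivalence via $C^\infty$ diffeomorphism germs of source and target. *)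

theory Defs
  imports "HOL-Analysis.Analysis"
begin

fun Ck_on :: "nat \<Rightarrow> 'a::real_normed_vector set \<Rightarrow> ('a \<Rightarrow> 'b::real_normed_vector) \<Rightarrow> bool" where
  "Ck_on 0 U f = continuous_on U f"
| "Ck_on (Suc k) U f =
     (\<exists>f'. (\<forall>x\<in>U. (f has_derivative f' x) (at x)) \<and> (\<forall>v. Ck_on k U (\<lambda>x. f' x v)))"

definition smooth_on :: "'a::real_normed_vector set \<Rightarrow> ('a \<Rightarrow> 'b::real_normed_vector) \<Rightarrow> bool" where
  "smooth_on U f \<longleftrightarrow> open U \<and> (\<forall>k. Ck_on k U f)"

definition rotM :: "real \<times> real \<Rightarrow> real \<times> real" where
  "rotM p = (- snd p, fst p)"

definition is_front :: "real set \<Rightarrow> (real \<Rightarrow> real \<times> real) \<Rightarrow> (real \<Rightarrow> real \<times> real) \<Rightarrow> bool" where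
  "is_front I \<gamma> \<nu> \<longleftrightarrow> smooth_on I \<gamma> \<and> smooth_on I \<nu> \<and>
     (\<forall>t\<in>I. norm (\<nu> t) = 1) \<and>
     (\<forall>t\<in>I. vector_derivative \<gamma> (at t) \<bullet> \<nu> t = 0) \<and>
     (\<forall>t\<in>I. (vector_derivative \<gamma> (at t), vector_derivative \<nu> (at t)) \<noteq> 0)"

definition ell :: "(real \<Rightarrow> real \<times> real) \<Rightarrow> real \<Rightarrow> real" where
  "ell \<nu> t = vector_derivative \<nu> (at t) \<bullet> rotM (\<nu> t)"

fun betaK :: "(real \<Rightarrow> real \<times> real) \<Rightarrow> (real \<Rightarrow> real \<times> real) \<Rightarrow> nat \<Rightarrow> real \<Rightarrow> real" where
  "betaK \<gamma> \<nu> 0 = (\<lambda>t. vector_derivative \<gamma> (at t) \<bullet> rotM (\<nu> t))"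
| "betaK \<gamma> \<nu> (Suc k) = (\<lambda>t. deriv (\<lambda>s. betaK \<gamma> \<nu> k s / ell \<nu> s) t)"

fun Ev :: "(real \<Rightarrow> real \<times> real) \<Rightarrow> (real \<Rightarrow> real \<times> real) \<Rightarrow> nat \<Rightarrow> real \<Rightarrow> real \<times> real" where
  "Ev \<gamma> \<nu> 0 = \<gamma>"
| "Ev \<gamma> \<nu> (Suc k) = (\<lambda>t. Ev \<gamma> \<nu> k t - (betaK \<gamma> \<nu> k t / ell \<nu> t) *\<^sub>R (rotM ^^ k) (\<nu> t))"

definition diffeo_on :: "'a::real_normed_vector set \<Rightarrow> 'a set \<Rightarrow> ('a \<Rightarrow> 'a) \<Rightarrow> bool" where
  "diffeo_on U V \<phi> \<longleftrightarrow> smooth_on U \<phi> \<and> smooth_on V (inv_into U \<phi>) \<and> bij_betw \<phi> U V"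

definition A_equiv_at :: "(real \<Rightarrow> real \<times> real) \<Rightarrow> real \<Rightarrow> (real \<Rightarrow> real \<times> real) \<Rightarrow> real \<Rightarrow> bool" where
  "A_equiv_at f t0 g s0 \<longleftrightarrow>
     (\<exists>U V \<phi> W W' \<Phi> N.
        diffeo_on U V \<phi> \<and> t0 \<in> U \<and> \<phi> t0 = s0 \<and>
        diffeo_on W W' \<Phi> \<and> f t0 \<in> W \<and> \<Phi> (f t0) = g s0 \<and>
        open N \<and> t0 \<in> N \<and> N \<subseteq> U \<and> f ` N \<subseteq> W \<and>
        (\<forall>t\<in>N. \<Phi> (f t) = g (\<phi> t)))"

definition cusp :: "nat \<Rightarrow> real \<Rightarrow> real \<times> real" where
  "cusp n t = (t ^ n, t ^ (n + 1))"

end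

theory Submission
  imports Defs
begin


fun C :: "nat \<Rightarrow> real set \<Rightarrow> (real \<Rightarrow> 'b::real_normed_vector) \<Rightarrow> bool" where
  "C 0 U f = continuous_on U f"
| "C (Suc k) U f = (\<exists>d. (\<forall>x\<in>U. (f has_vector_derivative d x) (at x)) \<and> C k U d)"

lemma C_mono: "C (Suc k) U f \<Longrightarrow> C k U f"
proof (induction k arbitrary: f)
  case 0
  then obtain d where "\<forall>x\<in>U. (f has_vector_derivative d x) (at x)" by auto
  then show ?case
    by (auto intro!: continuous_at_imp_continuous_on has_vector_derivative_continuous)
next
  case (Suc k)
  then obtain d where "\<forall>x\<in>U. (f has_vector_derivative d x) (at x)" "C (Suc k) U d" by auto
  then show ?case using Suc.IH by auto
qed

lemma C_cong: "open U \<Longrightarrow> C k U f \<Longrightarrow> (\<And>x. x \<in> U \<Longrightarrow> f x = g x) \<Longrightarrow> C k U g"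
proof (induction k arbitrary: f g)
  case 0
  then show ?case using continuous_on_cong by force
next
  case (Suc k)
  then obtain d where d: "\<forall>x\<in>U. (f has_vector_derivative d x) (at x)" "C k U d" by auto
  have "\<forall>x\<in>U. (g has_vector_derivative d x) (at x)"
    using d(1) Suc.prems by (metis has_vector_derivative_transform_within_open)
  then show ?case using d(2) by auto
qed

lemma C_add: "C k U f \<Longrightarrow> C k U g \<Longrightarrow> C k U (\<lambda>x. f x + g x)"
proof (induction k arbitrary: f g)
  case 0
  then show ?case by (auto intro: continuous_on_add)
next
  case (Suc k)
  then obtain d e where "\<forall>x\<in>U. (f has_vector_derivative d x) (at x)" "C k U d"
     "\<forall>x\<in>U. (g has_vector_derivative e x) (at x)" "C k U e" by auto
  then show ?case using Suc.IH
    by (auto intro!: exI[of _ "\<lambda>x. d x + e x"] has_vector_derivative_add)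
qed

lemma C_const: "C k U (\<lambda>x. c)"
proof (induction k arbitrary: c)
  case 0 then show ?case by auto
next
  case (Suc k) then show ?case
    by (auto intro!: exI[of _ "\<lambda>x. 0"] has_vector_derivative_const)
qed

lemma C_linear: "bounded_linear L \<Longrightarrow> C k U f \<Longrightarrow> C k U (\<lambda>x. L (f x))"
proof (induction k arbitrary: f)
  case 0
  then show ?case by (simp add: bounded_linear.continuous_on)
next
  case (Suc k)
  from Suc.prems(2) obtain d where d: "\<forall>x\<in>U. (f has_vector_derivative d x) (at x)" "C k U d"
    by auto
  have 1: "\<forall>x\<in>U. ((\<lambda>x. L (f x)) has_vector_derivative L (d x)) (at x)"
    using d(1) bounded_linear.has_vector_derivative[OF Suc.prems(1)] by blast
  have 2: "C k U (\<lambda>x. L (d x))" using Suc.IH[OF Suc.prems(1) d(2)] .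
  show ?case unfolding C.simps by (rule exI[of _ "\<lambda>x. L (d x)"]) (use 1 2 in simp)
qed

lemma C_bilinear: "bounded_bilinear P \<Longrightarrow> C k U f \<Longrightarrow> C k U g \<Longrightarrow> C k U (\<lambda>x. P (f x) (g x))"
proof (induction k arbitrary: f g)
  case 0
  then show ?case by (simp add: bounded_bilinear.continuous_on)
next
  case (Suc k)
  from Suc.prems(2) obtain d where d: "\<forall>x\<in>U. (f has_vector_derivative d x) (at x)" "C k U d"
    by auto
  from Suc.prems(3) obtain e where e: "\<forall>x\<in>U. (g has_vector_derivative e x) (at x)" "C k U e"
    by auto
  have f: "C k U f" by (rule C_mono[OF Suc.prems(2)])
  have g: "C k U g" by (rule C_mono[OF Suc.prems(3)])
  have 2: "C k U (\<lambda>x. P (f x) (e x) + P (d x) (g x))"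
    by (rule C_add[OF Suc.IH[OF Suc.prems(1) f e(2)] Suc.IH[OF Suc.prems(1) d(2) g]])
  have 1: "\<forall>x\<in>U. ((\<lambda>x. P (f x) (g x)) has_vector_derivative P (f x) (e x) + P (d x) (g x)) (at x)"
    using d(1) e(1) bounded_bilinear.has_vector_derivative[OF Suc.prems(1)] by blast
  show ?case unfolding C.simps
    by (rule exI[of _ "\<lambda>x. P (f x) (e x) + P (d x) (g x)"]) (use 1 2 in simp)
qed

lemma C_inverse: "C k U f \<Longrightarrow> (\<forall>x\<in>U. f x \<noteq> 0) \<Longrightarrow> C k U (\<lambda>x. inverse (f x :: real))"
proof (induction k arbitrary: f)
  case 0
  then show ?case by (auto intro: continuous_on_inverse)
next
  case (Suc k)
  from Suc.prems(1) obtain d where d: "\<forall>x\<in>U. (f has_vector_derivative d x) (at x)" "C k U d" by auto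
  have "C k U f" using C_mono[OF Suc.prems(1)] .
  then have i: "C k U (\<lambda>x. inverse (f x))" using Suc.IH Suc.prems(2) by blast
  have "C k U (\<lambda>x. - (d x * (inverse (f x) * inverse (f x))))"
    by (rule C_linear[OF bounded_linear_minus[OF bounded_linear_ident]],
      rule C_bilinear[OF bounded_bilinear_mult d(2)], rule C_bilinear[OF bounded_bilinear_mult i i])
  moreover have "\<forall>x\<in>U. ((\<lambda>x. inverse (f x)) has_vector_derivative
        - (d x * (inverse (f x) * inverse (f x)))) (at x)"
  proof
    fix x assume x: "x \<in> U"
    have "(f has_real_derivative d x) (at x)" using d(1) x
      by (simp add: has_real_derivative_iff_has_vector_derivative)
    then have "((\<lambda>x. inverse (f x)) has_real_derivative
        - (d x * (inverse (f x) * inverse (f x)))) (at x)"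
      using Suc.prems(2) x by (auto intro!: derivative_eq_intros simp: power2_eq_square)
    then show "((\<lambda>x. inverse (f x)) has_vector_derivative
        - (d x * (inverse (f x) * inverse (f x)))) (at x)"
      by (simp add: has_real_derivative_iff_has_vector_derivative)
  qed
  ultimately show ?case unfolding C.simps
    by (intro exI[of _ "\<lambda>x. - (d x * (inverse (f x) * inverse (f x)))"]) simp
qed

lemma Ck_on_imp_C: "Ck_on k U f \<Longrightarrow> C k U (f :: real \<Rightarrow> 'b::real_normed_vector)"
proof (induction k arbitrary: f)
  case 0 then show ?case by simp
next
  case (Suc k)
  then obtain f' where f': "\<forall>x\<in>U. (f has_derivative f' x) (at x)" "\<forall>v. Ck_on k U (\<lambda>x. f' x v)"
    by auto
  have "\<forall>x\<in>U. (f has_vector_derivative f' x 1) (at x)"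
  proof
    fix x assume x: "x \<in> U"
    have bl: "bounded_linear (f' x)" using f'(1) x has_derivative_bounded_linear by blast
    have "f' x = (\<lambda>h. h *\<^sub>R f' x 1)"
    proof
      fix h :: real
      have "f' x (h *\<^sub>R 1) = h *\<^sub>R f' x 1"
        by (rule linear_cmul[OF bounded_linear.linear[OF bl]])
      then show "f' x h = h *\<^sub>R f' x 1" by simp
    qed
    moreover have "(f has_derivative f' x) (at x)" using f'(1) x by blast
    ultimately have "(f has_derivative (\<lambda>h. h *\<^sub>R f' x 1)) (at x)" by metis
    then show "(f has_vector_derivative f' x 1) (at x)"
      unfolding has_vector_derivative_def .
  qed
  moreover have "C k U (\<lambda>x. f' x 1)" using Suc.IH f'(2) by blast
  ultimately show ?case unfolding C.simps by (intro exI[of _ "\<lambda>x. f' x 1"]) simp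
qed

definition smooth1 :: "real set \<Rightarrow> (real \<Rightarrow> 'b::real_normed_vector) \<Rightarrow> bool" where
  "smooth1 U f \<longleftrightarrow> (\<forall>k. C k U f)"

lemma smooth_on_imp: "smooth_on U f \<Longrightarrow> smooth1 U (f :: real \<Rightarrow> 'b::real_normed_vector)"
  by (simp add: smooth_on_def smooth1_def Ck_on_imp_C)

lemma smooth1_has_deriv: "smooth1 U f \<Longrightarrow> x \<in> U \<Longrightarrow>
   (f has_vector_derivative vector_derivative f (at x)) (at x)"
proof -
  assume a: "smooth1 U f" "x \<in> U"
  have "C (Suc 0) U f" using a(1) unfolding smooth1_def by blast
  then obtain d where "\<forall>x\<in>U. (f has_vector_derivative d x) (at x)" by auto
  then have d: "(f has_vector_derivative d x) (at x)" using a(2) by blast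
  then show ?thesis using d by (simp add: vector_derivative_at)
qed

lemma smooth1_deriv: "open U \<Longrightarrow> smooth1 U f \<Longrightarrow> smooth1 U (\<lambda>x. vector_derivative f (at x))"
  unfolding smooth1_def
proof
  fix k assume "open U" "\<forall>k. C k U f"
  then have "C (Suc k) U f" by blast
  then obtain d where d: "\<forall>x\<in>U. (f has_vector_derivative d x) (at x)" "C k U d"
    by auto
  show "C k U (\<lambda>x. vector_derivative f (at x))"
  proof (rule C_cong[OF \<open>open U\<close> d(2)])
    fix x assume "x \<in> U"
    then have "(f has_vector_derivative d x) (at x)" using d(1) by blast
    from vector_derivative_at[OF this] show "d x = vector_derivative f (at x)" by simp
  qed
qed

lemma smooth1_cong: assumes "open U" "smooth1 U f" "\<And>x. x \<in> U \<Longrightarrow> f x = g x" shows "smooth1 U g"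
  unfolding smooth1_def
proof
  fix k show "C k U g"
    by (rule C_cong[OF assms(1) _ assms(3)]) (use assms(2) in \<open>simp add: smooth1_def\<close>)
qed

lemma smooth1_linear: assumes "bounded_linear L" "smooth1 U f" shows "smooth1 U (\<lambda>x. L (f x))"
  unfolding smooth1_def
proof
  fix k show "C k U (\<lambda>x. L (f x))"
    by (rule C_linear[OF assms(1)]) (use assms(2) in \<open>simp add: smooth1_def\<close>)
qed

lemma smooth1_bilinear: assumes "bounded_bilinear P" "smooth1 U f" "smooth1 U g"
  shows "smooth1 U (\<lambda>x. P (f x) (g x))"
  unfolding smooth1_def
proof
  fix k show "C k U (\<lambda>x. P (f x) (g x))"
    by (rule C_bilinear[OF assms(1)]) (use assms(2,3) in \<open>simp_all add: smooth1_def\<close>)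
qed

lemma smooth1_inverse: assumes "smooth1 U f" "\<forall>x\<in>U. f x \<noteq> 0"
  shows "smooth1 U (\<lambda>x. inverse (f x :: real))"
  unfolding smooth1_def
proof
  fix k show "C k U (\<lambda>x. inverse (f x))"
    by (rule C_inverse[OF _ assms(2)]) (use assms(1) in \<open>simp add: smooth1_def\<close>)
qed

lemma smooth1_divide: assumes "smooth1 U f" "smooth1 U g" "\<forall>x\<in>U. g x \<noteq> 0"
  shows "smooth1 U (\<lambda>x. f x / g x :: real)"
proof -
  have "smooth1 U (\<lambda>x. f x * inverse (g x))"
    using smooth1_bilinear[OF bounded_bilinear_mult assms(1) smooth1_inverse[OF assms(2,3)]] .
  then show ?thesis by (simp add: divide_inverse)
qed




definition smallo :: "(real \<Rightarrow> 'b::real_normed_vector) \<Rightarrow> nat \<Rightarrow> bool" where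
  "smallo f m \<longleftrightarrow> (\<forall>e>0. \<exists>d>0. \<forall>t. \<bar>t\<bar> < d \<longrightarrow> norm (f t) \<le> e * \<bar>t\<bar> ^ m)"

lemma smallo_integrate:
  fixes f f' :: "real \<Rightarrow> 'b::real_normed_vector"
  assumes d0: "d0 > 0" and der: "\<forall>t. \<bar>t\<bar> < d0 \<longrightarrow> (f has_vector_derivative f' t) (at t)"
    and f0: "f 0 = 0" and so: "smallo f' m"
  shows "smallo f (Suc m)"
  unfolding smallo_def
proof (intro allI impI)
  fix e :: real assume e: "e > 0"
  from so e obtain d1 where d1: "d1 > 0" "\<forall>t. \<bar>t\<bar> < d1 \<longrightarrow> norm (f' t) \<le> e * \<bar>t\<bar> ^ m"
    unfolding smallo_def by blast
  define d where "d = min d0 d1"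
  have "d > 0" using d0 d1 by (simp add: d_def)
  moreover have "\<forall>t. \<bar>t\<bar> < d \<longrightarrow> norm (f t) \<le> e * \<bar>t\<bar> ^ Suc m"
  proof (intro allI impI)
    fix t :: real assume t: "\<bar>t\<bar> < d"
    define S where "S = {-\<bar>t\<bar>..\<bar>t\<bar>}"
    have cS: "convex S" by (simp add: S_def)
    have hd: "(f has_derivative (\<lambda>h. h *\<^sub>R f' s)) (at s within S)" if "s \<in> S" for s
    proof -
      have "\<bar>s\<bar> < d0" using that t by (auto simp: S_def d_def)
      then have "(f has_vector_derivative f' s) (at s)" using der by blast
      then show ?thesis unfolding has_vector_derivative_def by (rule has_derivative_at_withinI)
    qed
    have bd: "onorm (\<lambda>h. h *\<^sub>R f' s) \<le> e * \<bar>t\<bar> ^ m" if "s \<in> S" for s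
    proof -
      have "onorm (\<lambda>h. h *\<^sub>R f' s) = norm (f' s)"
        using onorm_scaleR_left[OF bounded_linear_ident, of "f' s"] by (simp add: onorm_id)
      also have "\<dots> \<le> e * \<bar>s\<bar> ^ m"
        using d1 that t by (auto simp: S_def d_def)
      also have "\<dots> \<le> e * \<bar>t\<bar> ^ m"
        using that e by (auto simp: S_def intro!: mult_left_mono power_mono)
      finally show ?thesis .
    qed
    have "t \<in> S" "0 \<in> S" by (auto simp: S_def)
    from differentiable_bound[OF cS hd bd this]
    show "norm (f t) \<le> e * \<bar>t\<bar> ^ Suc m" using f0 by (simp add: mult.commute mult.left_commute)
  qed
  ultimately show "\<exists>d>0. \<forall>t. \<bar>t\<bar> < d \<longrightarrow> norm (f t) \<le> e * \<bar>t\<bar> ^ Suc m" by blast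
qed

lemma smallo_bounded:
  fixes f :: "real \<Rightarrow> 'b::real_normed_vector" and h :: "real \<Rightarrow> 'c::real_normed_vector"
  assumes so: "smallo f m" and d0: "d0 > 0" and B: "B \<ge> 0"
    and hb: "\<forall>t. \<bar>t\<bar> < d0 \<longrightarrow> norm (h t) \<le> B * norm (f t)"
  shows "smallo h m"
  unfolding smallo_def
proof (intro allI impI)
  fix e :: real assume e: "e > 0"
  have "e / (B + 1) > 0" using e B by simp
  with so obtain d1 where d1: "d1 > 0" "\<forall>t. \<bar>t\<bar> < d1 \<longrightarrow> norm (f t) \<le> e / (B + 1) * \<bar>t\<bar> ^ m"
    unfolding smallo_def by blast
  have "\<forall>t. \<bar>t\<bar> < min d0 d1 \<longrightarrow> norm (h t) \<le> e * \<bar>t\<bar> ^ m"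
  proof (intro allI impI)
    fix t :: real assume t: "\<bar>t\<bar> < min d0 d1"
    have "norm (h t) \<le> B * norm (f t)" using hb t by auto
    also have "\<dots> \<le> B * (e / (B + 1) * \<bar>t\<bar> ^ m)"
    proof (rule mult_left_mono[OF _ B])
      show "norm (f t) \<le> e / (B + 1) * \<bar>t\<bar> ^ m" using d1 t by auto
    qed
    also have "\<dots> \<le> e * \<bar>t\<bar> ^ m"
    proof -
      have "B * (e / (B + 1)) \<le> e" using B e by (simp add: field_simps)
      then show ?thesis using mult_right_mono[of "B * (e / (B + 1))" e "\<bar>t\<bar> ^ m"]
        by (simp add: mult.assoc)
    qed
    finally show "norm (h t) \<le> e * \<bar>t\<bar> ^ m" .
  qed
  then show "\<exists>d>0. \<forall>t. \<bar>t\<bar> < d \<longrightarrow> norm (h t) \<le> e * \<bar>t\<bar> ^ m"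
    using d0 d1 by (intro exI[of _ "min d0 d1"]) auto
qed

lemma smallo_zero:
  fixes f :: "real \<Rightarrow> 'b::real_normed_vector"
  assumes "isCont f 0" "f 0 = 0" shows "smallo f 0"
  unfolding smallo_def
proof (intro allI impI)
  fix e :: real assume "e > 0"
  then obtain d where "d > 0" "\<forall>x'. dist x' 0 < d \<longrightarrow> dist (f x') (f 0) < e"
    using assms(1) unfolding continuous_at_eps_delta by blast
  then show "\<exists>d>0. \<forall>t. \<bar>t\<bar> < d \<longrightarrow> norm (f t) \<le> e * \<bar>t\<bar> ^ 0"
    using assms(2) by (intro exI[of _ d]) (auto simp: dist_norm less_imp_le)
qed

lemma smallo_chain:
  fixes g :: "nat \<Rightarrow> real \<Rightarrow> real" and l :: "real \<Rightarrow> real"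
  assumes d0: "d0 > 0"
    and der: "\<forall>j<N. \<forall>t. \<bar>t\<bar> < d0 \<longrightarrow> (g j has_vector_derivative g (Suc j) t * l t) (at t)"
    and z: "\<forall>j\<le>N. g j 0 = 0" and c: "isCont (g N) 0"
    and B: "B \<ge> 0" and lb: "\<forall>t. \<bar>t\<bar> < d0 \<longrightarrow> \<bar>l t\<bar> \<le> B"
  shows "smallo (g 0) N"
proof -
  have "m \<le> N \<Longrightarrow> smallo (g (N - m)) m" for m
  proof (induction m)
    case 0
    then show ?case using smallo_zero[OF c] z by simp
  next
    case (Suc m)
    define j where "j = N - Suc m"
    have js: "Suc j = N - m" using Suc.prems by (simp add: j_def)
    have so: "smallo (g (Suc j)) m" using Suc js by simp
    have so2: "smallo (\<lambda>t. g (Suc j) t * l t) m"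
    proof (rule smallo_bounded[OF so d0 B])
      show "\<forall>t. \<bar>t\<bar> < d0 \<longrightarrow> norm (g (Suc j) t * l t) \<le> B * norm (g (Suc j) t)"
      proof (intro allI impI)
        fix t :: real assume "\<bar>t\<bar> < d0"
        then have "\<bar>l t\<bar> \<le> B" using lb by blast
        then have "\<bar>l t\<bar> * \<bar>g (Suc j) t\<bar> \<le> B * \<bar>g (Suc j) t\<bar>"
          by (rule mult_right_mono) simp
        then show "norm (g (Suc j) t * l t) \<le> B * norm (g (Suc j) t)"
          by (simp add: abs_mult mult.commute)
      qed
    qed
    have "smallo (g j) (Suc m)"
    proof (rule smallo_integrate[OF d0 _ _ so2])
      show "\<forall>t. \<bar>t\<bar> < d0 \<longrightarrow> (g j has_vector_derivative g (Suc j) t * l t) (at t)"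
        using der Suc.prems by (simp add: j_def)
      show "g j 0 = 0" using z by (simp add: j_def)
    qed
    then show ?case by (simp add: j_def)
  qed
  from this[of N] show ?thesis by simp
qed




lemma no_A_equiv:
  fixes \<gamma> :: "real \<Rightarrow> real \<times> real"
  assumes n1: "n \<ge> 1" and so: "smallo (\<lambda>t. \<gamma> t - \<gamma> 0) n"
  shows "\<not> A_equiv_at \<gamma> 0 (cusp n) 0"
proof
  assume "A_equiv_at \<gamma> 0 (cusp n) 0"
  then obtain U V \<phi> W W' \<Phi> N where H:
        "diffeo_on U V \<phi> \<and> 0 \<in> U \<and> \<phi> 0 = 0 \<and>
        diffeo_on W W' \<Phi> \<and> \<gamma> 0 \<in> W \<and> \<Phi> (\<gamma> 0) = cusp n 0 \<and>
        open N \<and> 0 \<in> N \<and> N \<subseteq> U \<and> \<gamma> ` N \<subseteq> W \<and>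
        (\<forall>t\<in>N. \<Phi> (\<gamma> t) = cusp n (\<phi> t))"
    unfolding A_equiv_at_def by (elim exE) (rule that)
  from H have
    dU: "diffeo_on U V \<phi>" and U0: "0 \<in> U" and phi0: "\<phi> 0 = 0" and
    dW: "diffeo_on W W' \<Phi>" and W0: "\<gamma> 0 \<in> W" and Phi0: "\<Phi> (\<gamma> 0) = cusp n 0" and
    N: "open N" "0 \<in> N" "N \<subseteq> U" and eq: "\<forall>t\<in>N. \<Phi> (\<gamma> t) = cusp n (\<phi> t)"
    by auto
  have c00: "cusp n 0 = 0" using n1 by (simp add: cusp_def zero_prod_def)
  have sU: "smooth_on U \<phi>" and sV: "smooth_on V (inv_into U \<phi>)" and bij: "bij_betw \<phi> U V"
    using dU unfolding diffeo_on_def by auto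
  have oU: "open U" and oV: "open V" using sU sV unfolding smooth_on_def by auto
  define d\<phi> where "d\<phi> = vector_derivative \<phi> (at 0)"
  have Dphi: "(\<phi> has_real_derivative d\<phi>) (at 0)"
    using smooth1_has_deriv[OF smooth_on_imp[OF sU] U0]
    by (simp add: d\<phi>_def has_real_derivative_iff_has_vector_derivative)
  have V0: "\<phi> 0 \<in> V" using bij_betw_apply[OF bij U0] .
  define \<psi> where "\<psi> = inv_into U \<phi>"
  define d\<psi> where "d\<psi> = vector_derivative \<psi> (at (\<phi> 0))"
  have Dpsi: "(\<psi> has_real_derivative d\<psi>) (at (\<phi> 0))"
    using smooth1_has_deriv[OF smooth_on_imp[OF sV] V0]
    by (simp add: d\<psi>_def \<psi>_def has_real_derivative_iff_has_vector_derivative)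
  have comp: "(\<psi> \<circ> \<phi> has_real_derivative d\<psi> * d\<phi>) (at 0)"
    using DERIV_chain[OF Dpsi Dphi] .
  have "((\<lambda>x. x) has_real_derivative d\<psi> * d\<phi>) (at 0)"
  proof (rule has_field_derivative_transform_within_open[OF comp oU U0])
    fix x assume "x \<in> U"
    then show "(\<psi> \<circ> \<phi>) x = x"
      using inv_into_f_f[OF bij_betw_imp_inj_on[OF bij]] by (simp add: \<psi>_def)
  qed
  then have "d\<psi> * d\<phi> = 1" using DERIV_unique DERIV_ident by blast
  then have dphi_nz: "d\<phi> \<noteq> 0" by auto
  define c where "c = \<bar>d\<phi>\<bar> / 2"
  have c0: "c > 0" using dphi_nz by (simp add: c_def)
  have "(\<phi> has_derivative (*) d\<phi>) (at 0)" using Dphi by (simp add: has_field_derivative_def)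
  then obtain d1 where d1: "d1 > 0" "\<forall>y. norm (y - 0) < d1 \<longrightarrow>
        norm (\<phi> y - \<phi> 0 - d\<phi> * (y - 0)) \<le> c * norm (y - 0)"
    using \<open>(\<phi> has_derivative (*) d\<phi>) (at 0)\<close>[unfolded has_derivative_at_alt, THEN conjunct2, rule_format, OF c0]
    by blast
  have phil: "\<bar>\<phi> y\<bar> \<ge> c * \<bar>y\<bar>" if "\<bar>y\<bar> < d1" for y
  proof -
    have "\<bar>\<phi> y - d\<phi> * y\<bar> \<le> c * \<bar>y\<bar>" using d1 that phi0 by auto
    moreover have "\<bar>d\<phi> * y\<bar> = 2 * c * \<bar>y\<bar>" by (simp add: c_def abs_mult)
    ultimately show ?thesis by linarith
  qed
  have sW: "smooth_on W \<Phi>" using dW unfolding diffeo_on_def by auto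
  then have "Ck_on (Suc 0) W \<Phi>" unfolding smooth_on_def by blast
  then obtain \<Phi>' where "\<forall>x\<in>W. (\<Phi> has_derivative \<Phi>' x) (at x)" by auto
  then have DPhi: "(\<Phi> has_derivative \<Phi>' (\<gamma> 0)) (at (\<gamma> 0))" using W0 by blast
  then have blP: "bounded_linear (\<Phi>' (\<gamma> 0))" by (rule has_derivative_bounded_linear)
  then obtain K where K: "K > 0" "\<forall>x. norm (\<Phi>' (\<gamma> 0) x) \<le> norm x * K"
    using bounded_linear.pos_bounded by blast
  obtain d2 where d2: "d2 > 0" "\<forall>y. norm (y - \<gamma> 0) < d2 \<longrightarrow>
        norm (\<Phi> y - \<Phi> (\<gamma> 0) - \<Phi>' (\<gamma> 0) (y - \<gamma> 0)) \<le> 1 * norm (y - \<gamma> 0)"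
    using DPhi[unfolded has_derivative_at_alt, THEN conjunct2, rule_format, OF zero_less_one]
    by blast
  have Lip: "norm (\<Phi> y) \<le> (K + 1) * norm (y - \<gamma> 0)" if "norm (y - \<gamma> 0) < d2" for y
  proof -
    have "norm (\<Phi> y - \<Phi> (\<gamma> 0) - \<Phi>' (\<gamma> 0) (y - \<gamma> 0)) \<le> norm (y - \<gamma> 0)"
      using d2(2)[rule_format, OF that] by simp
    moreover have "norm (\<Phi>' (\<gamma> 0) (y - \<gamma> 0)) \<le> norm (y - \<gamma> 0) * K" using K by blast
    moreover have "\<Phi> (\<gamma> 0) = 0" using Phi0 c00 by simp
    ultimately show ?thesis using norm_triangle_ineq4[of "\<Phi> y - \<Phi>' (\<gamma> 0) (y - \<gamma> 0)" "- \<Phi>' (\<gamma> 0) (y - \<gamma> 0)"]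
      norm_triangle_ineq[of "\<Phi> y - \<Phi>' (\<gamma> 0) (y - \<gamma> 0)" "\<Phi>' (\<gamma> 0) (y - \<gamma> 0)"]
      by (simp add: algebra_simps)
  qed
  obtain d3 where d3: "d3 > 0" "ball 0 d3 \<subseteq> N" using N(1,2) open_contains_ball by blast
  define \<epsilon> where "\<epsilon> = min (c ^ n / (2 * (K + 1))) (d2 / 2)"
  have eps: "\<epsilon> > 0" using c0 K d2 by (simp add: \<epsilon>_def)
  obtain d4 where d4: "d4 > 0" "\<forall>t. \<bar>t\<bar> < d4 \<longrightarrow> norm (\<gamma> t - \<gamma> 0) \<le> \<epsilon> * \<bar>t\<bar> ^ n"
    using so eps unfolding smallo_def by blast
  define t where "t = min (min d1 d3) (min d4 1) / 2"
  have t0: "t > 0" using d1 d3 d4 by (simp add: t_def)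
  have td: "\<bar>t\<bar> < d1" "\<bar>t\<bar> < d3" "\<bar>t\<bar> < d4" "\<bar>t\<bar> < 1" using t0 by (auto simp: t_def)
  have tN: "t \<in> N" using d3 td by (auto simp: dist_norm)
  have pow1: "\<bar>t\<bar> ^ n \<le> 1" using td by (simp add: power_le_one)
  have g1: "norm (\<gamma> t - \<gamma> 0) \<le> \<epsilon> * \<bar>t\<bar> ^ n" using d4 td by blast
  have "\<epsilon> * \<bar>t\<bar> ^ n \<le> \<epsilon>" using pow1 eps by (simp add: mult_left_le)
  then have "norm (\<gamma> t - \<gamma> 0) < d2" using g1 d2 by (simp add: \<epsilon>_def)
  then have "norm (\<Phi> (\<gamma> t)) \<le> (K + 1) * norm (\<gamma> t - \<gamma> 0)" by (rule Lip)
  also have "\<dots> \<le> (K + 1) * (\<epsilon> * \<bar>t\<bar> ^ n)" using g1 K by (intro mult_left_mono) auto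
  also have "\<dots> \<le> (K + 1) * (c ^ n / (2 * (K + 1)) * \<bar>t\<bar> ^ n)"
    using K by (intro mult_left_mono mult_right_mono) (auto simp: \<epsilon>_def)
  also have "\<dots> = c ^ n * \<bar>t\<bar> ^ n / 2" using K by (simp add: field_simps)
  finally have up: "norm (\<Phi> (\<gamma> t)) \<le> c ^ n * \<bar>t\<bar> ^ n / 2" .
  have "norm (\<Phi> (\<gamma> t)) = norm (cusp n (\<phi> t))" using eq tN by simp
  also have "\<dots> \<ge> \<bar>\<phi> t\<bar> ^ n"
  proof -
    have "\<bar>\<phi> t\<bar> ^ n = norm (\<phi> t ^ n)" by (simp add: power_abs)
    also have "\<dots> \<le> norm (cusp n (\<phi> t))" unfolding cusp_def by (rule norm_fst_le)
    finally show ?thesis .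
  qed
  finally have "\<bar>\<phi> t\<bar> ^ n \<le> c ^ n * \<bar>t\<bar> ^ n / 2" using up by linarith
  moreover have "(c * \<bar>t\<bar>) ^ n \<le> \<bar>\<phi> t\<bar> ^ n"
    using phil[OF td(1)] c0 by (intro power_mono) auto
  moreover have "(c * \<bar>t\<bar>) ^ n > 0" using c0 t0 by simp
  ultimately show False by (simp add: power_mult_distrib)
qed




lemma rotM_bl: "bounded_linear rotM"
proof -
  have "linear rotM"
    by (rule linearI) (auto simp: rotM_def)
  then show ?thesis by (simp add: linear_conv_bounded_linear)
qed

lemma rotM_pow_bl: "bounded_linear (rotM ^^ k)"
proof (induction k)
  case 0 then show ?case by (simp add: id_def bounded_linear_ident)
next
  case (Suc k)
  then show ?case using bounded_linear_compose[OF rotM_bl Suc]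
    by (simp add: o_def)
qed

lemma norm_rotM: "norm (rotM p) = norm p"
  by (cases p) (simp add: rotM_def norm_Pair add.commute)

lemma norm_rotM_pow: "norm ((rotM ^^ k) p) = norm p"
  by (induction k) (auto simp: norm_rotM)

lemma rotM_rotM: "rotM (rotM p) = - p"
  by (cases p) (simp add: rotM_def)

lemma rotM_pow_SS: "(rotM ^^ Suc (Suc k)) p = - (rotM ^^ k) p"
proof -
  have "(rotM ^^ Suc (Suc k)) p = (rotM ^^ k) (rotM (rotM p))"
    by (simp add: funpow_Suc_right del: funpow.simps)
  also have "\<dots> = (rotM ^^ k) (- p)" by (simp add: rotM_rotM)
  also have "\<dots> = - (rotM ^^ k) p" using linear_neg[OF bounded_linear.linear[OF rotM_pow_bl]] .
  finally show ?thesis .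
qed

lemma rotM_pow_Suc: "(rotM ^^ Suc k) p = (rotM ^^ k) (rotM p)"
  by (simp add: funpow_Suc_right del: funpow.simps)

lemma perp_decomp:
  fixes v p :: "real \<times> real"
  assumes "norm p = 1" "v \<bullet> p = 0"
  shows "v = (v \<bullet> rotM p) *\<^sub>R rotM p"
proof -
  obtain a b where p: "p = (a, b)" by (cases p)
  obtain x y where v: "v = (x, y)" by (cases v)
  have n: "a * a + b * b = 1" using assms(1) p
    by (simp add: norm_Pair power2_eq_square)
  have o: "x * a + y * b = 0" using assms(2) p v by simp
  have "x = (- x * b + y * a) * (- b)"
  proof -
    have "(- x * b + y * a) * (- b) = x * (b * b) - (y * b) * a" by (simp add: algebra_simps)
    also have "\<dots> = x * (b * b) + (x * a) * a"
    proof -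
      have yb: "y * b = - (x * a)" using o by linarith
      show ?thesis by (simp only: yb) (simp add: algebra_simps)
    qed
    also have "\<dots> = x * (a * a + b * b)" by (simp add: algebra_simps)
    finally show ?thesis using n by simp
  qed
  moreover have "y = (- x * b + y * a) * a"
  proof -
    have "(- x * b + y * a) * a = - (x * a) * b + y * (a * a)" by (simp add: algebra_simps)
    also have "\<dots> = y * (b * b) + y * (a * a)"
    proof -
      have xa: "x * a = - (y * b)" using o by linarith
      show ?thesis by (simp only: xa) (simp add: algebra_simps)
    qed
    also have "\<dots> = y * (a * a + b * b)" by (simp add: algebra_simps)
    finally show ?thesis using n by simp
  qed
  ultimately show ?thesis using p v by (simp add: rotM_def)
qed




theorem mainTheorem4:
  fixes n :: nat and I :: "real set" and \<gamma> \<nu> :: "real \<Rightarrow> real \<times> real"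
  assumes "n \<ge> 2"
    and "is_interval I" and "open I" and "0 \<in> I"
    and "is_front I \<gamma> \<nu>"
    and "\<forall>t\<in>I. ell \<nu> t \<noteq> 0"
    and "(\<gamma> has_vector_derivative 0) (at 0)"
    and "\<forall>k\<in>{1..n-1}. (Ev \<gamma> \<nu> k has_vector_derivative 0) (at 0)"
  shows "\<not> A_equiv_at \<gamma> 0 (cusp n) 0"
proof -
  have oI: "open I" and I0: "0 \<in> I" using assms(3,4) by auto
  have fr: "smooth_on I \<gamma>" "smooth_on I \<nu>" "\<forall>t\<in>I. norm (\<nu> t) = 1"
     "\<forall>t\<in>I. vector_derivative \<gamma> (at t) \<bullet> \<nu> t = 0"
    using assms(5) unfolding is_front_def by auto
  have sg: "smooth1 I \<gamma>" using smooth_on_imp[OF fr(1)] .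
  have sn: "smooth1 I \<nu>" using smooth_on_imp[OF fr(2)] .
  define dg where "dg = (\<lambda>t. vector_derivative \<gamma> (at t))"
  define dn where "dn = (\<lambda>t. vector_derivative \<nu> (at t))"
  define l where "l = ell \<nu>"
  define \<beta> where "\<beta> = betaK \<gamma> \<nu>"
  define g where "g = (\<lambda>k t. \<beta> k t / l t)"
  have lnz: "\<forall>t\<in>I. l t \<noteq> 0" using assms(6) by (simp add: l_def)
  have Hg: "(\<gamma> has_vector_derivative dg t) (at t)" if "t \<in> I" for t
    unfolding dg_def by (rule smooth1_has_deriv[OF sg that])
  have Hn: "(\<nu> has_vector_derivative dn t) (at t)" if "t \<in> I" for t
    unfolding dn_def by (rule smooth1_has_deriv[OF sn that])
  have sdg: "smooth1 I dg" unfolding dg_def by (rule smooth1_deriv[OF oI sg])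
  have sdn: "smooth1 I dn" unfolding dn_def by (rule smooth1_deriv[OF oI sn])
  have l_eq: "l = (\<lambda>t. dn t \<bullet> rotM (\<nu> t))" by (simp add: l_def ell_def dn_def fun_eq_iff)
  have sl: "smooth1 I l"
    unfolding l_eq by (rule smooth1_bilinear[OF bounded_bilinear_inner sdn smooth1_linear[OF rotM_bl sn]])
  have b0: "\<beta> 0 = (\<lambda>t. dg t \<bullet> rotM (\<nu> t))" by (simp add: \<beta>_def dg_def fun_eq_iff)
  have bS: "\<beta> (Suc k) t = deriv (g k) t" for k t by (simp add: \<beta>_def g_def l_def)
  have dv: "deriv (g k) t = vector_derivative (g k) (at t)" if "smooth1 I (g k)" "t \<in> I" for k t
  proof -
    have "(g k has_vector_derivative vector_derivative (g k) (at t)) (at t)"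
      by (rule smooth1_has_deriv[OF that])
    then have "(g k has_real_derivative vector_derivative (g k) (at t)) (at t)"
      by (simp add: has_real_derivative_iff_has_vector_derivative)
    then show ?thesis by (rule DERIV_imp_deriv)
  qed
  have sgk: "smooth1 I (g k)" for k
  proof (induction k)
    case 0
    have "smooth1 I (\<beta> 0)" unfolding b0
      by (rule smooth1_bilinear[OF bounded_bilinear_inner sdg smooth1_linear[OF rotM_bl sn]])
    then show ?case unfolding g_def by (rule smooth1_divide[OF _ sl lnz])
  next
    case (Suc k)
    have "smooth1 I (\<lambda>t. vector_derivative (g k) (at t) / l t)"
      by (rule smooth1_divide[OF smooth1_deriv[OF oI Suc] sl lnz])
    then show ?case
    proof (rule smooth1_cong[OF oI])
      fix t assume "t \<in> I"
      then show "vector_derivative (g k) (at t) / l t = g (Suc k) t"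
        using dv[OF Suc] by (simp add: g_def bS)
    qed
  qed
  have Dg: "(g k has_vector_derivative \<beta> (Suc k) t) (at t)" if "t \<in> I" for k t
    using smooth1_has_deriv[OF sgk that] dv[OF sgk that] bS by simp
  have gl: "g k t * l t = \<beta> k t" if "t \<in> I" for k t
    using lnz that by (simp add: g_def)
  have nu_perp: "dn t \<bullet> \<nu> t = 0" if t: "t \<in> I" for t
  proof -
    have "((\<lambda>s. \<nu> s \<bullet> \<nu> s) has_vector_derivative \<nu> t \<bullet> dn t + dn t \<bullet> \<nu> t) (at t)"
      by (rule bounded_bilinear.has_vector_derivative[OF bounded_bilinear_inner Hn[OF t] Hn[OF t]])
    then have D: "((\<lambda>s. \<nu> s \<bullet> \<nu> s) has_real_derivative \<nu> t \<bullet> dn t + dn t \<bullet> \<nu> t) (at t)"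
      by (simp add: has_real_derivative_iff_has_vector_derivative)
    obtain e where e: "e > 0" "ball t e \<subseteq> I" using oI t open_contains_ball by blast
    have one: "\<nu> s \<bullet> \<nu> s = 1" if "s \<in> I" for s
      using fr(3) that power2_norm_eq_inner[of "\<nu> s"] by simp
    have "\<forall>y. \<bar>t - y\<bar> < e \<longrightarrow> \<nu> t \<bullet> \<nu> t = \<nu> y \<bullet> \<nu> y"
    proof (intro allI impI)
      fix y assume "\<bar>t - y\<bar> < e"
      then have "y \<in> I" using e by (auto simp: dist_real_def)
      then show "\<nu> t \<bullet> \<nu> t = \<nu> y \<bullet> \<nu> y" using one t by simp
    qed
    from DERIV_local_const[OF D e(1) this] show ?thesis by (simp add: inner_commute)
  qed
  have dn_eq: "dn t = l t *\<^sub>R rotM (\<nu> t)" if "t \<in> I" for t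
    using perp_decomp[of "\<nu> t" "dn t"] fr(3) nu_perp that l_eq by simp
  have dg_eq: "dg t = \<beta> 0 t *\<^sub>R rotM (\<nu> t)" if "t \<in> I" for t
    using perp_decomp[of "\<nu> t" "dg t"] fr(3,4) that b0 by (simp add: dg_def)
  have Ev_eq: "Ev \<gamma> \<nu> (Suc k) = (\<lambda>t. Ev \<gamma> \<nu> k t - g k t *\<^sub>R (rotM ^^ k) (\<nu> t))" for k
    by (simp add: g_def \<beta>_def l_def)
  have P: "((\<lambda>t. g j t *\<^sub>R (rotM ^^ j) (\<nu> t)) has_vector_derivative
          \<beta> j t *\<^sub>R (rotM ^^ Suc j) (\<nu> t) + \<beta> (Suc j) t *\<^sub>R (rotM ^^ j) (\<nu> t)) (at t)"
    if t: "t \<in> I" for j t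
  proof -
    have "((\<lambda>t. g j t *\<^sub>R (rotM ^^ j) (\<nu> t)) has_vector_derivative
          g j t *\<^sub>R (rotM ^^ j) (dn t) + \<beta> (Suc j) t *\<^sub>R (rotM ^^ j) (\<nu> t)) (at t)"
      by (rule bounded_bilinear.has_vector_derivative[OF bounded_bilinear_scaleR Dg[OF t]
            bounded_linear.has_vector_derivative[OF rotM_pow_bl Hn[OF t]]])
    moreover have "g j t *\<^sub>R (rotM ^^ j) (dn t) = \<beta> j t *\<^sub>R (rotM ^^ Suc j) (\<nu> t)"
    proof -
      have "(rotM ^^ j) (dn t) = l t *\<^sub>R (rotM ^^ Suc j) (\<nu> t)"
        using dn_eq[OF t] linear_cmul[OF bounded_linear.linear[OF rotM_pow_bl]] rotM_pow_Suc
        by metis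
      then show ?thesis using gl[OF t] by simp
    qed
    ultimately show ?thesis by simp
  qed
  have evd: "\<forall>t\<in>I. (Ev \<gamma> \<nu> (Suc k) has_vector_derivative
               (- \<beta> (Suc k) t) *\<^sub>R (rotM ^^ k) (\<nu> t)) (at t)" for k
  proof (induction k)
    case 0
    show ?case
    proof
      fix t assume t: "t \<in> I"
      have "((\<lambda>t. \<gamma> t - g 0 t *\<^sub>R (rotM ^^ 0) (\<nu> t)) has_vector_derivative
         dg t - (\<beta> 0 t *\<^sub>R (rotM ^^ Suc 0) (\<nu> t) + \<beta> (Suc 0) t *\<^sub>R (rotM ^^ 0) (\<nu> t))) (at t)"
        by (rule has_vector_derivative_diff[OF Hg[OF t] P[OF t]])
      moreover have "dg t - (\<beta> 0 t *\<^sub>R (rotM ^^ Suc 0) (\<nu> t) + \<beta> (Suc 0) t *\<^sub>R (rotM ^^ 0) (\<nu> t))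
           = (- \<beta> (Suc 0) t) *\<^sub>R (rotM ^^ 0) (\<nu> t)"
        using dg_eq[OF t] by simp
      ultimately show "(Ev \<gamma> \<nu> (Suc 0) has_vector_derivative
               (- \<beta> (Suc 0) t) *\<^sub>R (rotM ^^ 0) (\<nu> t)) (at t)"
        using Ev_eq[of 0] by (simp del: funpow.simps)
    qed
  next
    case (Suc k)
    show ?case
    proof
      fix t assume t: "t \<in> I"
      have "((\<lambda>t. Ev \<gamma> \<nu> (Suc k) t - g (Suc k) t *\<^sub>R (rotM ^^ Suc k) (\<nu> t)) has_vector_derivative
         (- \<beta> (Suc k) t) *\<^sub>R (rotM ^^ k) (\<nu> t) -
         (\<beta> (Suc k) t *\<^sub>R (rotM ^^ Suc (Suc k)) (\<nu> t) + \<beta> (Suc (Suc k)) t *\<^sub>R (rotM ^^ Suc k) (\<nu> t))) (at t)"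
        by (rule has_vector_derivative_diff[OF Suc[rule_format, OF t] P[OF t]])
      moreover have "(- \<beta> (Suc k) t) *\<^sub>R (rotM ^^ k) (\<nu> t) -
         (\<beta> (Suc k) t *\<^sub>R (rotM ^^ Suc (Suc k)) (\<nu> t) + \<beta> (Suc (Suc k)) t *\<^sub>R (rotM ^^ Suc k) (\<nu> t))
         = (- \<beta> (Suc (Suc k)) t) *\<^sub>R (rotM ^^ Suc k) (\<nu> t)"
        unfolding rotM_pow_SS by (simp add: algebra_simps del: funpow.simps)
      ultimately show "(Ev \<gamma> \<nu> (Suc (Suc k)) has_vector_derivative
               (- \<beta> (Suc (Suc k)) t) *\<^sub>R (rotM ^^ Suc k) (\<nu> t)) (at t)"
        using Ev_eq[of "Suc k"] by (simp del: funpow.simps)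
    qed
  qed
  have bz: "\<beta> k 0 = 0" if "k \<le> n - 1" for k
  proof (cases k)
    case 0
    have "dg 0 = 0" unfolding dg_def by (rule vector_derivative_at[OF assms(7)])
    then show ?thesis using 0 b0 by simp
  next
    case (Suc j)
    have "k \<in> {1..n-1}" using that Suc by simp
    then have z: "(Ev \<gamma> \<nu> (Suc j) has_vector_derivative 0) (at 0)" using assms(8) Suc by blast
    have "(Ev \<gamma> \<nu> (Suc j) has_vector_derivative (- \<beta> (Suc j) 0) *\<^sub>R (rotM ^^ j) (\<nu> 0)) (at 0)"
      using evd I0 by blast
    then have "(- \<beta> (Suc j) 0) *\<^sub>R (rotM ^^ j) (\<nu> 0) = 0"
      using z vector_derivative_unique_at by blast
    moreover have "(rotM ^^ j) (\<nu> 0) \<noteq> 0"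
    proof -
      have "norm ((rotM ^^ j) (\<nu> 0)) = 1" using norm_rotM_pow fr(3) I0 by simp
      then show ?thesis by auto
    qed
    ultimately show ?thesis using Suc by simp
  qed
  have gz: "\<forall>k\<le>n-1. g k 0 = 0" using bz by (simp add: g_def)
  obtain r where r: "r > 0" "ball 0 r \<subseteq> I" using oI I0 open_contains_ball by blast
  have inI: "t \<in> I" if "\<bar>t\<bar> < r" for t using r that by (auto simp: dist_real_def)
  have "isCont l 0"
    using smooth1_has_deriv[OF sl I0] has_vector_derivative_continuous by blast
  then obtain d5 where d5: "d5 > 0" "\<forall>x'. dist x' 0 < d5 \<longrightarrow> dist (l x') (l 0) < 1"
    unfolding continuous_at_eps_delta using zero_less_one by blast
  define B where "B = \<bar>l 0\<bar> + 1"
  define d0 where "d0 = min r d5"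
  have d0: "d0 > 0" using r d5 by (simp add: d0_def)
  have B: "B \<ge> 0" by (simp add: B_def)
  have lb: "\<forall>t. \<bar>t\<bar> < d0 \<longrightarrow> \<bar>l t\<bar> \<le> B"
  proof (intro allI impI)
    fix t :: real assume "\<bar>t\<bar> < d0"
    then have "dist (l t) (l 0) < 1" using d5 by (simp add: d0_def dist_real_def)
    then show "\<bar>l t\<bar> \<le> B" by (simp add: B_def dist_real_def)
  qed
  have so0: "smallo (g 0) (n - 1)"
  proof (rule smallo_chain[of d0 "n - 1" g l B, OF d0 _ gz _ B lb])
    show "\<forall>j<n - 1. \<forall>t. \<bar>t\<bar> < d0 \<longrightarrow> (g j has_vector_derivative g (Suc j) t * l t) (at t)"
    proof (intro allI impI)
      fix j t assume "j < n - 1" "\<bar>t\<bar> < d0"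
      then have t: "t \<in> I" using inI by (simp add: d0_def)
      show "(g j has_vector_derivative g (Suc j) t * l t) (at t)"
        using Dg[OF t] gl[OF t] by simp
    qed
    show "isCont (g (n - 1)) 0"
      using smooth1_has_deriv[OF sgk I0] has_vector_derivative_continuous by blast
  qed
  have so1: "smallo dg (n - 1)"
  proof (rule smallo_bounded[OF so0 d0 B])
    show "\<forall>t. \<bar>t\<bar> < d0 \<longrightarrow> norm (dg t) \<le> B * norm (g 0 t)"
    proof (intro allI impI)
      fix t :: real assume tt: "\<bar>t\<bar> < d0"
      then have t: "t \<in> I" using inI by (simp add: d0_def)
      have "norm (dg t) = \<bar>\<beta> 0 t\<bar>"
        using dg_eq[OF t] norm_rotM fr(3) t by simp
      also have "\<dots> = \<bar>g 0 t\<bar> * \<bar>l t\<bar>" by (subst gl[OF t, of 0, symmetric]) (rule abs_mult)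
      also have "\<dots> \<le> \<bar>g 0 t\<bar> * B" using lb tt by (intro mult_left_mono) auto
      finally show "norm (dg t) \<le> B * norm (g 0 t)" by (simp add: mult.commute)
    qed
  qed
  have "smallo (\<lambda>t. \<gamma> t - \<gamma> 0) (Suc (n - 1))"
  proof (rule smallo_integrate[OF r(1) _ _ so1])
    show "\<forall>t. \<bar>t\<bar> < r \<longrightarrow> ((\<lambda>t. \<gamma> t - \<gamma> 0) has_vector_derivative dg t) (at t)"
      using has_vector_derivative_diff[OF Hg has_vector_derivative_const, simplified] inI by blast
  qed simp
  then have "smallo (\<lambda>t. \<gamma> t - \<gamma> 0) n" using assms(1) by simp
  then show ?thesis using no_A_equiv assms(1) by simp
qed


end
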